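(* Let $K$ be a field of characteristic $0$, let $E$ be a subfield of $K$, let $f,g\in K[X]$ have degree greater than one, and let $x_0,y_0\in K$. Assume that $(f,x_0)$ and $(g,y_0)$ are both isotrivial over $E$, and that $\mathcal{O}_f(x_0)\cap\mathcal{O}_g(y_0)$ is infinite. Then there exists a single linear $\mu\in\overline{K}[X]$ such that $\mu\circ f\circ\mu^{\circ(-1)}\in\overline{E}[X]$, $\mu\circ g\circ\mu^{\circ(-1)}\in\overline{E}[X]$, $\mu(x_0)\in\overline{E}$ and $\mu(y_0)\in\overline{E}$.
   Context: $\overline K$ is an algebraic closure of $K$ and $\overline E$ is the algebraic closure of $E$ inside $\overline K$. A linear polynomial has degree exactly $1$ and $\mu^{\circ(-1)}$ is its compositional inverse. For $\phi\in K[X]$ and $z\in K$, the pair $(\phi,z)$ is isotrivial over $E$ if there exists a linear $\ell\in\overline K[X]$ with $\ell\circ\phi\circ\ell^{\circ(-1)}\in\overline E[X]$ and $\ell(z)\in\overline E$. $\mathcal{O}_f(x_0)=\{f^{\circ n}(x_0):n\ge0\}$, where $f^{\circ n}$ is the $n$-th iterate. *)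

theory Defs
  imports "HOL-Computational_Algebra.Polynomial"
begin

definition is_subfield :: "'a::field set \<Rightarrow> bool" where
  "is_subfield S \<longleftrightarrow> 0 \<in> S \<and> 1 \<in> S \<and>
     (\<forall>x\<in>S. \<forall>y\<in>S. x + y \<in> S \<and> x * y \<in> S) \<and>
     (\<forall>x\<in>S. - x \<in> S \<and> inverse x \<in> S)"

definition poly_over :: "'a::field set \<Rightarrow> 'a poly \<Rightarrow> bool" where
  "poly_over S p \<longleftrightarrow> (\<forall>i. coeff p i \<in> S)"

definition algebraic_over :: "'a::field set \<Rightarrow> 'a \<Rightarrow> bool" where
  "algebraic_over S x \<longleftrightarrow> (\<exists>p. p \<noteq> 0 \<and> poly_over S p \<and> poly p x = 0)"

definition alg_closure_in :: "'a::field set \<Rightarrow> 'a set" where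
  "alg_closure_in S = {x. algebraic_over S x}"

text \<open>Compositional inverse of a linear polynomial a + b X (b \<noteq> 0).\<close>
definition lin_inv :: "'a::field poly \<Rightarrow> 'a poly" where
  "lin_inv l = [: - coeff l 0 / coeff l 1, 1 / coeff l 1 :]"

definition conj_lin :: "'a::field poly \<Rightarrow> 'a poly \<Rightarrow> 'a poly" where
  "conj_lin l phi = pcompose l (pcompose phi (lin_inv l))"

text \<open>(phi, z) is isotrivial over E (ambient type is the algebraic closure).\<close>
definition isotrivial :: "'a::field set \<Rightarrow> 'a poly \<Rightarrow> 'a \<Rightarrow> bool" where
  "isotrivial E phi z \<longleftrightarrow> (\<exists>l. degree l = 1 \<and>
      poly_over (alg_closure_in E) (conj_lin l phi) \<and> poly l z \<in> alg_closure_in E)"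

definition orbit :: "'a::comm_semiring_0 poly \<Rightarrow> 'a \<Rightarrow> 'a set" where
  "orbit f x0 = {(poly f ^^ n) x0 | n. True}"

end

theory Submission
  imports Defs "HOL-Algebra.Finite_Extensions" "HOL-Algebra.Algebraic_Closure_Type"
begin


definition RR :: "'a::field ring" where "RR = ring_of_type_algebra"

lemma RR_field: "field (RR::'a::field ring)" unfolding RR_def by (rule field_from_type_algebra)

lemma RR_simps [simp]: "carrier RR = UNIV" "x \<oplus>\<^bsub>RR\<^esub> y = x + y" "x \<otimes>\<^bsub>RR\<^esub> y = x * y"
  "\<zero>\<^bsub>RR\<^esub> = 0" "\<one>\<^bsub>RR\<^esub> = 1"
  by (simp_all add: RR_def ring_of_type_algebra_def)

lemma RR_pow [simp]: "x [^]\<^bsub>RR\<^esub> (n::nat) = x ^ n"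
  by (induction n) (auto simp: RR_def ring_of_type_algebra_def)

lemma RR_neg [simp]: "\<ominus>\<^bsub>RR\<^esub> (x::'a::field) = - x"
proof -
  interpret field RR by (rule RR_field)
  have "\<ominus>\<^bsub>RR\<^esub> x + x = 0" using l_neg[of x] by simp
  thus ?thesis by (simp add: eq_neg_iff_add_eq_0)
qed

lemma RR_inv: "(x::'a::field) \<noteq> 0 \<Longrightarrow> inv\<^bsub>RR\<^esub> x = inverse x"
proof -
  interpret field RR by (rule RR_field)
  assume "x \<noteq> 0"
  hence "x \<in> Units RR" using field_Units by auto
  hence "inv\<^bsub>RR\<^esub> x * x = 1" using Units_l_inv[of x] by simp
  moreover have "inv\<^bsub>RR\<^esub> x = inv\<^bsub>RR\<^esub> x * x * inverse x" using \<open>x \<noteq> 0\<close> by simp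
  ultimately show ?thesis by simp
qed

lemma RR_eval: "ring.eval RR p x = poly (Poly (rev p)) (x::'a::field)"
proof -
  interpret field RR by (rule RR_field)
  show ?thesis
    by (induction p) (auto simp: Poly_append poly_monom algebra_simps)
qed

lemma RR_subfield:
  assumes "is_subfield (E::'a::field set)" shows "subfield E RR"
proof -
  interpret field RR by (rule RR_field)
  show ?thesis
  proof (rule subfieldI'[OF subringI])
    fix x y assume "x \<in> E" "y \<in> E"
    thus "\<ominus>\<^bsub>RR\<^esub> x \<in> E" "x \<otimes>\<^bsub>RR\<^esub> y \<in> E" "x \<oplus>\<^bsub>RR\<^esub> y \<in> E"
      using assms unfolding is_subfield_def by auto
  next
    fix x assume "x \<in> E - {\<zero>\<^bsub>RR\<^esub>}"
    thus "inv\<^bsub>RR\<^esub> x \<in> E" using assms unfolding is_subfield_def by (auto simp: RR_inv)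
  qed (use assms in \<open>auto simp: is_subfield_def\<close>)
qed

lemma alg_to_RR:
  assumes E: "is_subfield (E::'a::field set)" and "algebraic_over E x"
  shows "ring.algebraic RR E x"
proof -
  interpret field RR by (rule RR_field)
  obtain p where p: "p \<noteq> 0" "poly_over E p" "poly p x = 0"
    using assms(2) unfolding algebraic_over_def by blast
  let ?q = "rev (coeffs p)"
  have "Poly (rev ?q) = p" by simp
  have q: "?q \<in> carrier (E[X]\<^bsub>RR\<^esub>)"
    using p unfolding univ_poly_carrier[symmetric] polynomial_def poly_over_def
    by (auto simp: coeffs_def hd_rev last_map)
  have e: "eval ?q x = eval [] x" using p by (simp add: RR_eval)
  have "[] \<in> carrier (E[X]\<^bsub>RR\<^esub>)"
    unfolding univ_poly_carrier[symmetric] polynomial_def by auto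
  moreover have "?q \<noteq> []" using p by simp
  ultimately show ?thesis using q e unfolding transcendental_def inj_on_def by blast
qed

lemma RR_to_alg:
  assumes E: "is_subfield (E::'a::field set)" and "ring.algebraic RR E x"
  shows "algebraic_over E x"
proof -
  interpret field RR by (rule RR_field)
  obtain p where p: "p \<in> carrier (E[X]\<^bsub>RR\<^esub>)" "p \<noteq> []" "eval p x = \<zero>\<^bsub>RR\<^esub>"
    using algebraicE[OF subfieldE(1)[OF RR_subfield[OF E]], of x] assms(2) by (auto simp: over_def)
  have ne: "Poly (rev p) \<noteq> 0"
  proof
    assume "Poly (rev p) = 0"
    then obtain n where n: "rev p = replicate n 0" by (auto simp: Poly_eq_0)
    have "hd p \<noteq> 0" using p unfolding univ_poly_carrier[symmetric] polynomial_def by auto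
    moreover have "hd p = last (rev p)" using p(2) by (simp add: last_rev)
    ultimately show False using n p(2) by (metis last_replicate rev_is_Nil_conv replicate_empty)
  qed
  have sub: "set p \<subseteq> E" using p unfolding univ_poly_carrier[symmetric] polynomial_def by auto
  have "0 \<in> E" using E by (simp add: is_subfield_def)
  hence "poly_over E (Poly (rev p))" using sub unfolding poly_over_def
    by (auto simp: nth_default_def) (metis length_rev nth_mem set_rev subsetD)
  moreover have "poly (Poly (rev p)) x = 0" using p(3) RR_eval[of p x] by simp
  ultimately show ?thesis unfolding algebraic_over_def using ne by blast
qed


lemma alg_closure_subfield:
  assumes E: "is_subfield (E::'a::field set)" shows "is_subfield (alg_closure_in E)"
proof -
  interpret field RR by (rule RR_field)
  have eq: "{x \<in> carrier RR. (algebraic over E) x} = alg_closure_in E"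
    using alg_to_RR[OF E] RR_to_alg[OF E] by (auto simp: over_def alg_closure_in_def)
  have S: "subfield (alg_closure_in E) RR"
    using subfield_of_algebraics[OF RR_subfield[OF E]] unfolding eq .
  have R: "subring (alg_closure_in E) RR" using subfieldE(1)[OF S] .
  show ?thesis unfolding is_subfield_def
  proof (intro conjI ballI)
    show "0 \<in> alg_closure_in E" using subringE(2)[OF R] by simp
    show "1 \<in> alg_closure_in E" using subringE(3)[OF R] by simp
    fix x y assume x: "x \<in> alg_closure_in E" and y: "y \<in> alg_closure_in E"
    show "x + y \<in> alg_closure_in E" using subringE(7)[OF R x y] by simp
    show "x * y \<in> alg_closure_in E" using subringE(6)[OF R x y] by simp
  next
    fix x assume x: "x \<in> alg_closure_in E"
    show "- x \<in> alg_closure_in E" using subringE(5)[OF R x] by simp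
    show "inverse x \<in> alg_closure_in E"
    proof (cases "x = 0")
      case True thus ?thesis using subringE(2)[OF R] by simp
    next
      case False
      hence "inv\<^bsub>RR\<^esub> x \<in> alg_closure_in E" using subfield_m_inv(1)[OF S, of x] x by simp
      thus ?thesis using RR_inv[OF False] by simp
    qed
  qed
qed



lemma sf: assumes "is_subfield A"
  shows "0 \<in> A" "1 \<in> A" "x \<in> A \<Longrightarrow> y \<in> A \<Longrightarrow> x + y \<in> A" "x \<in> A \<Longrightarrow> y \<in> A \<Longrightarrow> x * y \<in> A"
    "x \<in> A \<Longrightarrow> - x \<in> A" "x \<in> A \<Longrightarrow> inverse x \<in> A"
  using assms unfolding is_subfield_def by auto

lemma sf_diff: "is_subfield A \<Longrightarrow> x \<in> A \<Longrightarrow> y \<in> A \<Longrightarrow> x - y \<in> A"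
  using sf[of A] by (metis diff_conv_add_uminus)

lemma sf_div: "is_subfield A \<Longrightarrow> x \<in> A \<Longrightarrow> y \<in> A \<Longrightarrow> x / y \<in> A"
  using sf[of A] by (metis divide_inverse)

lemma po_pCons: "is_subfield A \<Longrightarrow> a \<in> A \<Longrightarrow> poly_over A p \<Longrightarrow> poly_over A (pCons a p)"
  unfolding poly_over_def by (auto simp: coeff_pCons split: nat.split)

lemma po_0: "is_subfield A \<Longrightarrow> poly_over A 0"
  unfolding poly_over_def using sf by auto

lemma po_add: "is_subfield A \<Longrightarrow> poly_over A p \<Longrightarrow> poly_over A q \<Longrightarrow> poly_over A (p + q)"
  unfolding poly_over_def by (auto intro: sf)

lemma po_smult: "is_subfield A \<Longrightarrow> a \<in> A \<Longrightarrow> poly_over A q \<Longrightarrow> poly_over A (Polynomial.smult a q)"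
  unfolding poly_over_def by (auto intro: sf)

lemma po_mult: "is_subfield A \<Longrightarrow> poly_over A p \<Longrightarrow> poly_over A q \<Longrightarrow> poly_over A (p * q)"
proof (induction p)
  case 0 thus ?case using po_0 by simp
next
  case (pCons a p)
  have "a \<in> A" "poly_over A p" using pCons.prems(2) unfolding poly_over_def
    by (metis coeff_pCons_0, metis coeff_pCons_Suc)
  thus ?case using pCons by (auto intro!: po_add po_smult po_pCons po_0 sf)
qed

lemma po_pcompose: "is_subfield A \<Longrightarrow> poly_over A p \<Longrightarrow> poly_over A q \<Longrightarrow> poly_over A (pcompose p q)"
proof (induction p)
  case 0 thus ?case using po_0 by simp
next
  case (pCons a p)
  have "a \<in> A" "poly_over A p" using pCons.prems(2) unfolding poly_over_def
    by (metis coeff_pCons_0, metis coeff_pCons_Suc)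
  thus ?case using pCons by (auto simp: pcompose_pCons intro!: po_add po_mult po_pCons po_0 sf)
qed

lemma po_poly: "is_subfield A \<Longrightarrow> poly_over A p \<Longrightarrow> x \<in> A \<Longrightarrow> poly p x \<in> A"
proof (induction p)
  case 0 thus ?case using sf by simp
next
  case (pCons a p)
  have "a \<in> A" "poly_over A p" using pCons.prems(2) unfolding poly_over_def
    by (metis coeff_pCons_0, metis coeff_pCons_Suc)
  thus ?case using pCons by (auto intro!: sf)
qed

lemma lin_form: assumes "Polynomial.degree (l::'a::field poly) = 1"
  shows "l = [:Polynomial.coeff l 0, Polynomial.coeff l 1:]" "Polynomial.coeff l 1 \<noteq> 0"
proof -
  show "Polynomial.coeff l 1 \<noteq> 0" using assms leading_coeff_0_iff[of l] by auto
  show "l = [:Polynomial.coeff l 0, Polynomial.coeff l 1:]"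
  proof (rule poly_eqI)
    fix n show "Polynomial.coeff l n = Polynomial.coeff [:Polynomial.coeff l 0, Polynomial.coeff l 1:] n"
      using assms by (cases n; cases "n - 1") (auto simp: coeff_eq_0)
  qed
qed

lemma poly_lin: "Polynomial.degree (l::'a::field poly) = 1 \<Longrightarrow> poly l z = Polynomial.coeff l 0 + Polynomial.coeff l 1 * z"
  by (subst lin_form(1), assumption) simp

lemma poly_lin_inv: "poly (lin_inv l) z = (z - Polynomial.coeff l 0) / Polynomial.coeff l 1"
  unfolding lin_inv_def by (simp add: diff_divide_distrib)

lemma poly_conj: "poly (conj_lin l phi) z = poly l (poly phi (poly (lin_inv l) z))"
  unfolding conj_lin_def by (simp add: poly_pcompose)

lemma conj_step: assumes "Polynomial.degree (l::'a::field poly) = 1"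
  shows "poly l (poly f w) = poly (conj_lin l f) (poly l w)"
proof -
  have "poly (lin_inv l) (poly l w) = w"
    using lin_form(2)[OF assms] by (simp add: poly_lin[OF assms] poly_lin_inv)
  thus ?thesis by (simp add: poly_conj)
qed

lemma orbit_in: assumes A: "is_subfield A" and l: "Polynomial.degree l = 1"
  and F: "poly_over A (conj_lin l f)" and x: "poly l x0 \<in> A"
  shows "z \<in> orbit f x0 \<Longrightarrow> poly l z \<in> A"
proof -
  have "poly l ((poly f ^^ n) x0) \<in> A" for n
    by (induction n) (auto simp: x conj_step[OF l] intro!: po_poly[OF A F])
  thus "z \<in> orbit f x0 \<Longrightarrow> poly l z \<in> A" unfolding orbit_def by auto
qed


lemma two_points: assumes "infinite S" obtains z1 z2 where "z1 \<in> S" "z2 \<in> S" "z1 \<noteq> z2"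
proof -
  obtain z1 where "z1 \<in> S" using assms infinite_imp_nonempty by blast
  moreover have "infinite (S - {z1})" using assms by simp
  then obtain z2 where "z2 \<in> S - {z1}" using infinite_imp_nonempty by blast
  ultimately show ?thesis using that by blast
qed

lemma main_core:
  fixes f g :: "'a::field_char_0 poly" and A :: "'a set"
  assumes A: "is_subfield A"
    and l: "Polynomial.degree l = 1" "poly_over A (conj_lin l f)" "poly l x0 \<in> A"
    and m: "Polynomial.degree m = 1" "poly_over A (conj_lin m g)" "poly m y0 \<in> A"
    and inf: "infinite (orbit f x0 \<inter> orbit g y0)"
  shows "\<exists>\<mu>. Polynomial.degree \<mu> = 1 \<and> poly_over A (conj_lin \<mu> f) \<and> poly_over A (conj_lin \<mu> g) \<and>
           poly \<mu> x0 \<in> A \<and> poly \<mu> y0 \<in> A"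
proof -
  define a where "a = Polynomial.coeff l 0"
  define b where "b = Polynomial.coeff l 1"
  define c where "c = Polynomial.coeff m 0"
  define d where "d = Polynomial.coeff m 1"
  have b0: "b \<noteq> 0" and d0: "d \<noteq> 0" using lin_form(2)[OF l(1)] lin_form(2)[OF m(1)] a_def b_def c_def d_def by auto
  have pl: "poly l z = a + b * z" and pm: "poly m z = c + d * z" for z
    using poly_lin[OF l(1)] poly_lin[OF m(1)] a_def b_def c_def d_def by auto
  obtain z1 z2 where z: "z1 \<in> orbit f x0 \<inter> orbit g y0" "z2 \<in> orbit f x0 \<inter> orbit g y0" "z1 \<noteq> z2"
    using two_points[OF inf] by blast
  have lz: "poly l z1 \<in> A" "poly l z2 \<in> A" using orbit_in[OF A l] z by auto
  have mz: "poly m z1 \<in> A" "poly m z2 \<in> A" using orbit_in[OF A m] z by auto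
  define r where "r = d / b"
  have "r = (poly m z1 - poly m z2) / (poly l z1 - poly l z2)"
    using z(3) b0 unfolding r_def pl pm by (simp add: field_simps)
  hence rA: "r \<in> A" using lz mz A by (simp add: sf_div sf_diff)
  have r0: "r \<noteq> 0" using b0 d0 r_def by simp
  define s where "s = c - r * a"
  have "s = poly m z1 - r * poly l z1" unfolding s_def pl pm r_def using b0 by (simp add: field_simps)
  hence sA: "s \<in> A" using lz mz rA A by (simp add: sf_diff sf(4))
  have mrel: "poly m z = s + r * poly l z" for z
    unfolding s_def pl pm r_def using b0 by (simp add: field_simps)
  have y0A: "poly l y0 \<in> A"
  proof -
    have "poly l y0 = (poly m y0 - s) / r" using mrel[of y0] r0 by (simp add: field_simps)
    thus ?thesis using m(3) sA rA A by (simp add: sf_div sf_diff)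
  qed
  define \<sigma> where "\<sigma> = [:s, r:]"
  define \<tau> where "\<tau> = [:- s / r, 1 / r:]"
  have eq: "conj_lin l g = pcompose \<tau> (pcompose (conj_lin m g) \<sigma>)"
  proof -
    have "poly (conj_lin l g) z = poly (pcompose \<tau> (pcompose (conj_lin m g) \<sigma>)) z" for z
    proof -
      have inv: "poly (lin_inv m) (s + r * z) = poly (lin_inv l) z"
        unfolding poly_lin_inv a_def[symmetric] b_def[symmetric] c_def[symmetric] d_def[symmetric] s_def r_def using b0 d0
        by (simp add: field_simps)
      have ps: "poly \<sigma> z = s + r * z" by (simp add: \<sigma>_def)
      have "poly (pcompose \<tau> (pcompose (conj_lin m g) \<sigma>)) z
          = poly \<tau> (poly m (poly g (poly (lin_inv m) (poly \<sigma> z))))"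
        by (simp add: poly_pcompose poly_conj)
      also have "\<dots> = poly \<tau> (poly m (poly g (poly (lin_inv l) z)))"
        by (simp only: ps inv)
      also have "\<dots> = - s / r + (1 / r) * poly m (poly g (poly (lin_inv l) z))"
        by (simp add: \<tau>_def)
      also have "\<dots> = poly l (poly g (poly (lin_inv l) z))"
        unfolding mrel using r0 by (simp add: field_simps)
      finally show ?thesis by (simp add: poly_conj)
    qed
    thus ?thesis using poly_eq_poly_eq_iff by blast
  qed
  have "poly_over A (conj_lin l g)" unfolding eq
    using A m(2) rA sA r0
    by (auto simp: \<tau>_def \<sigma>_def intro!: po_pcompose po_pCons po_0 sf_div sf(5) sf(2))
  thus ?thesis using l y0A by blast
qed

hide_const (open) Polynomials.degree

theorem mainTheorem14:
  fixes K E :: "'a :: {alg_closed_field, field_char_0} set"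
    and f g :: "'a poly" and x0 y0 :: 'a
  assumes "is_subfield K" and "\<forall>x. algebraic_over K x"
    and "is_subfield E" and "E \<subseteq> K"
    and "poly_over K f" and "poly_over K g"
    and "degree f > 1" and "degree g > 1"
    and "x0 \<in> K" and "y0 \<in> K"
    and "isotrivial E f x0" and "isotrivial E g y0"
    and "infinite (orbit f x0 \<inter> orbit g y0)"
  shows "\<exists>\<mu>. degree \<mu> = 1 \<and>
           poly_over (alg_closure_in E) (conj_lin \<mu> f) \<and>
           poly_over (alg_closure_in E) (conj_lin \<mu> g) \<and>
           poly \<mu> x0 \<in> alg_closure_in E \<and> poly \<mu> y0 \<in> alg_closure_in E"
  proof -
  have A: "is_subfield (alg_closure_in E)" using alg_closure_subfield[OF assms(3)] .
  obtain l where l: "degree l = 1" "poly_over (alg_closure_in E) (conj_lin l f)"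
      "poly l x0 \<in> alg_closure_in E"
    using assms(11) unfolding isotrivial_def by blast
  obtain m where m: "degree m = 1" "poly_over (alg_closure_in E) (conj_lin m g)"
      "poly m y0 \<in> alg_closure_in E"
    using assms(12) unfolding isotrivial_def by blast
  show ?thesis using main_core[OF A l m assms(13)] .
qed

end
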